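(* Let $G$ be an internally vertex-color-avoiding connected graph on $n$ vertices whose vertices are colored with exactly $k$ colors. Then $|E(G)|\ge \binom{n}{2}$ if $k=1$, and $|E(G)|\ge \left\lceil \frac{2k-1}{2k-2}n-\frac{k}{k-1}\right\rceil$ if $k\ge 2$. Moreover, these lower bounds are sharp (for each $k$, attained by suitable such graphs for all sufficiently large $n$).
   Context: Vertex-colorings are arbitrary (not necessarily proper). Two vertices $u,v$ are internally vertex-$c$-avoiding connected (for a color $c$) if some $u$-$v$ path contains no internal vertex of color $c$. A graph is internally vertex-color-avoiding connected if any two vertices are internally vertex-$c$-avoiding connected for every color $c$. *)

theory Defs
  imports Complex_Main
begin

definition simple_graph :: "'a set \<Rightarrow> 'a set set \<Rightarrow> bool" where
  "simple_graph V E \<longleftrightarrow> finite V \<and> (\<forall>e\<in>E. e \<subseteq> V \<and> card e = 2)"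

definition is_path :: "'a set \<Rightarrow> 'a set set \<Rightarrow> 'a list \<Rightarrow> 'a \<Rightarrow> 'a \<Rightarrow> bool" where
  "is_path V E p u v \<longleftrightarrow> p \<noteq> [] \<and> hd p = u \<and> last p = v \<and> distinct p \<and> set p \<subseteq> V \<and>
     (\<forall>i. Suc i < length p \<longrightarrow> {p ! i, p ! Suc i} \<in> E)"

definition internal_vertices :: "'a list \<Rightarrow> 'a set" where
  "internal_vertices p = set (butlast (tl p))"

definition int_c_avoiding_connected ::
  "'a set \<Rightarrow> 'a set set \<Rightarrow> ('a \<Rightarrow> 'c) \<Rightarrow> 'c \<Rightarrow> 'a \<Rightarrow> 'a \<Rightarrow> bool" where
  "int_c_avoiding_connected V E col c u v \<longleftrightarrow>
     (\<exists>p. is_path V E p u v \<and> (\<forall>w\<in>internal_vertices p. col w \<noteq> c))"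

text \<open>Colorings are arbitrary functions; "every colour c" ranges over all colours (colours not
  used on V impose plain connectivity, which is implied anyway).\<close>
definition int_vca_connected :: "'a set \<Rightarrow> 'a set set \<Rightarrow> ('a \<Rightarrow> 'c) \<Rightarrow> bool" where
  "int_vca_connected V E col \<longleftrightarrow>
     (\<forall>c. \<forall>u\<in>V. \<forall>v\<in>V. int_c_avoiding_connected V E col c u v)"

definition icva_bound :: "nat \<Rightarrow> nat \<Rightarrow> int" where
  "icva_bound n k = (if k = 1 then int (n choose 2)
     else \<lceil>(2 * real k - 1) / (2 * real k - 2) * real n - real k / (real k - 1)\<rceil>)"

end

theory Submission
  imports Defs
begin


fun wk :: "'a set set \<Rightarrow> 'a list \<Rightarrow> bool" where
  "wk E [] = True"
| "wk E [x] = True"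
| "wk E (x # y # xs) = ({x,y} \<in> E \<and> wk E (y # xs))"

lemma wk_append: "wk E (xs @ y # ys) \<longleftrightarrow> wk E (xs @ [y]) \<and> wk E (y # ys)"
proof (induction xs)
  case Nil then show ?case by simp
next
  case (Cons a xs)
  then show ?case by (cases xs) auto
qed

lemma wk_iff: "wk E p \<longleftrightarrow> (\<forall>i. Suc i < length p \<longrightarrow> {p!i, p!Suc i} \<in> E)"
proof (induction E p rule: wk.induct)
  case (3 E x y xs)
  show ?case
  proof
    assume "wk E (x # y # xs)"
    then have a: "{x,y} \<in> E" and b: "\<forall>i. Suc i < length (y#xs) \<longrightarrow> {(y#xs)!i, (y#xs)!Suc i} \<in> E"
      using 3 by auto
    show "\<forall>i. Suc i < length (x # y # xs) \<longrightarrow> {(x # y # xs) ! i, (x # y # xs) ! Suc i} \<in> E"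
    proof (intro allI impI)
      fix i assume "Suc i < length (x # y # xs)"
      then show "{(x # y # xs) ! i, (x # y # xs) ! Suc i} \<in> E"
        using a b by (cases i) auto
    qed
  next
    assume h: "\<forall>i. Suc i < length (x # y # xs) \<longrightarrow> {(x # y # xs) ! i, (x # y # xs) ! Suc i} \<in> E"
    have "{x,y} \<in> E" using h[rule_format, of 0] by simp
    moreover have "\<forall>i. Suc i < length (y#xs) \<longrightarrow> {(y#xs)!i, (y#xs)!Suc i} \<in> E"
      using h[rule_format, of "Suc i" for i] by auto
    ultimately show "wk E (x # y # xs)" using 3 by simp
  qed
qed auto

definition wrel :: "'a set set \<Rightarrow> 'a set \<Rightarrow> ('a \<times> 'a) set" where
  "wrel E T = {(a,b). {a,b} \<in> E \<and> a \<in> T \<and> b \<in> T}"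

lemma wk_rtrancl: "wk E p \<Longrightarrow> p \<noteq> [] \<Longrightarrow> set p \<subseteq> T \<Longrightarrow> (hd p, last p) \<in> (wrel E T)\<^sup>*"
proof (induction E p rule: wk.induct)
  case (3 E x y xs)
  then have "(y, last (y#xs)) \<in> (wrel E T)\<^sup>*" by simp
  moreover have "(x,y) \<in> wrel E T" using 3 by (simp add: wrel_def)
  ultimately show ?case by (simp add: converse_rtrancl_into_rtrancl)
qed auto

lemma rtrancl_wk: "(u,v) \<in> (wrel E T)\<^sup>* \<Longrightarrow>
   \<exists>p. p \<noteq> [] \<and> hd p = u \<and> last p = v \<and> set p \<subseteq> insert u T \<and> wk E p"
proof (induction rule: converse_rtrancl_induct)
  case base
  then show ?case by (intro exI[of _ "[v]"]) auto
next
  case (step u w)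
  then obtain p where p: "p \<noteq> []" "hd p = w" "last p = v" "set p \<subseteq> insert w T" "wk E p" by blast
  have uw: "{u,w} \<in> E" "u \<in> T" "w \<in> T" using step(1) by (auto simp: wrel_def)
  obtain r where r: "p = w # r" using p by (cases p) auto
  show ?case
    apply (intro exI[of _ "u # p"])
    using p uw r by (cases r) auto
qed

lemma wk_shorten: "wk E p \<Longrightarrow> p \<noteq> [] \<Longrightarrow>
  \<exists>q. q \<noteq> [] \<and> hd q = hd p \<and> last q = last p \<and> distinct q \<and> set q \<subseteq> set p \<and> wk E q"
proof (induction "length p" arbitrary: p rule: less_induct)
  case less
  show ?case
  proof (cases "distinct p")
    case True then show ?thesis using less.prems by blast
  next
    case False
    then obtain xs y ys zs where d: "p = xs @ [y] @ ys @ [y] @ zs"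
      using not_distinct_decomp by blast
    define p' where "p' = xs @ y # zs"
    have "wk E (xs @ [y])" "wk E (y # ys @ y # zs)" using less.prems(1) d wk_append[of E xs y "ys @ y # zs"] by auto
    moreover have "wk E (y # zs)" using calculation(2) wk_append[of E "y # ys" y zs] by simp
    ultimately have w: "wk E p'" unfolding p'_def using wk_append by metis
    have len: "length p' < length p" using d p'_def by simp
    have ne: "p' \<noteq> []" by (simp add: p'_def)
    have h: "hd p' = hd p" using d p'_def by (cases xs) auto
    have l: "last p' = last p" using d p'_def by (cases zs) auto
    have s: "set p' \<subseteq> set p" using d p'_def by auto
    from less.hyps[OF len w ne] h l s show ?thesis by fastforce
  qed
qed

lemma distinct_internal:
  assumes "distinct q" "w \<in> internal_vertices q"
  shows "w \<in> set q \<and> w \<noteq> hd q \<and> w \<noteq> last q"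
proof -
  obtain a r where q: "q = a # r" using assms(2) by (cases q) (auto simp: internal_vertices_def)
  have wr: "w \<in> set (butlast r)" using assms(2) q by (simp add: internal_vertices_def)
  then have rne: "r \<noteq> []" by auto
  have "distinct (butlast r @ [last r])" using assms(1) q rne by simp
  then have "last r \<notin> set (butlast r)" by simp
  moreover have "a \<notin> set r" using assms(1) q by simp
  moreover have "set (butlast r) \<subseteq> set r" by (rule in_set_butlastD[THEN subsetI]) 
  ultimately show ?thesis using wr q rne by auto
qed

lemma rt_icac:
  assumes "u \<in> V" "v \<in> V"
    and "(u,v) \<in> (wrel E ({w\<in>V. col w \<noteq> c} \<union> {u,v}))\<^sup>*"
  shows "int_c_avoiding_connected V E col c u v"
proof -
  let ?T = "{w\<in>V. col w \<noteq> c} \<union> {u,v}"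
  obtain p where p: "p \<noteq> []" "hd p = u" "last p = v" "set p \<subseteq> insert u ?T" "wk E p"
    using rtrancl_wk[OF assms(3)] by blast
  obtain q where q: "q \<noteq> []" "hd q = u" "last q = v" "distinct q" "set q \<subseteq> set p" "wk E q"
    using wk_shorten[OF p(5) p(1)] p by metis
  have "is_path V E q u v"
    unfolding is_path_def using q p assms(1,2) wk_iff[of E q] by auto
  moreover have "\<forall>w\<in>internal_vertices q. col w \<noteq> c"
  proof
    fix w assume "w \<in> internal_vertices q"
    from distinct_internal[OF q(4) this] q p show "col w \<noteq> c" by auto
  qed
  ultimately show ?thesis unfolding int_c_avoiding_connected_def by blast
qed



lemma tree_bound:
  assumes fW: "finite W" and rW: "r \<in> W" and fF: "finite F"
    and conn: "\<forall>w\<in>W. (w,r) \<in> R\<^sup>*" and RF: "\<And>a b. (a,b) \<in> R \<Longrightarrow> {a,b} \<in> F"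
  shows "card W \<le> card F + 1"
proof -
  define dist where "dist w = (LEAST m. (w,r) \<in> R^^m)" for w
  have key: "\<exists>y. (w,y) \<in> R \<and> (y,r) \<in> R\<^sup>* \<and> Suc (dist y) = dist w \<and> dist w > 0"
    if "(w,r) \<in> R\<^sup>*" "w \<noteq> r" for w
  proof -
    have ex: "\<exists>m. (w,r) \<in> R^^m" using that(1) rtrancl_imp_relpow by blast
    have wm: "(w,r) \<in> R^^(dist w)" unfolding dist_def using LeastI_ex[OF ex] .
    have "dist w \<noteq> 0"
    proof
      assume "dist w = 0"
      with wm have "(w,r) \<in> R^^0" by simp
      then show False using that(2) by (auto elim: relpow_0_E)
    qed
    then obtain j where j: "dist w = Suc j" by (cases "dist w") auto
    then obtain y where y: "(w,y) \<in> R" "(y,r) \<in> R^^j" using wm relpow_Suc_D2 by metis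
    have "dist y \<le> j" unfolding dist_def using y(2) by (rule Least_le)
    moreover have yd: "(y,r) \<in> R^^(dist y)" unfolding dist_def using LeastI_ex[of "\<lambda>m. (y,r) \<in> R^^m"] y(2) by blast
    have "(w,r) \<in> R^^(Suc (dist y))" using relpow_Suc_I2[OF y(1) yd] .
    then have "dist w \<le> Suc (dist y)" unfolding dist_def by (rule Least_le)
    ultimately have "Suc (dist y) = dist w" using j by simp
    moreover have "(y,r) \<in> R\<^sup>*" using y(2) relpow_imp_rtrancl by metis
    ultimately show ?thesis using y(1) j by auto
  qed
  define par where "par w = (SOME y. (w,y) \<in> R \<and> (y,r) \<in> R\<^sup>* \<and> Suc (dist y) = dist w \<and> dist w > 0)" for w
  have par: "(w, par w) \<in> R \<and> (par w,r) \<in> R\<^sup>* \<and> Suc (dist (par w)) = dist w \<and> dist w > 0"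
    if "w \<in> W - {r}" for w
    unfolding par_def using someI_ex[OF key] that conn by blast
  have inj: "inj_on (\<lambda>w. {w, par w}) (W - {r})"
  proof (rule inj_onI)
    fix w w' assume a: "w \<in> W - {r}" "w' \<in> W - {r}" "{w, par w} = {w', par w'}"
    show "w = w'"
    proof (rule ccontr)
      assume "w \<noteq> w'"
      then have "w = par w'" "w' = par w" using a(3) by (auto simp: doubleton_eq_iff)
      then show False using par[OF a(1)] par[OF a(2)] by simp
    qed
  qed
  have sub: "(\<lambda>w. {w, par w}) ` (W - {r}) \<subseteq> F" using par RF by blast
  have "card (W - {r}) \<le> card F"
    using card_inj_on_le[OF inj sub fF] .
  then show ?thesis using rW fW by (simp add: card_Diff_singleton)
qed

lemma card_swap:
  assumes "finite A" "finite B"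
  shows "(\<Sum>a\<in>A. card {b\<in>B. P a b}) = (\<Sum>b\<in>B. card {a\<in>A. P a b})"
proof -
  have "(\<Sum>a\<in>A. card {b\<in>B. P a b}) = (\<Sum>a\<in>A. \<Sum>b\<in>B. if P a b then 1 else 0)"
    using assms by (simp add: sum.inter_filter[symmetric])
  also have "\<dots> = (\<Sum>b\<in>B. \<Sum>a\<in>A. if P a b then 1 else 0)" by (rule sum.swap)
  also have "\<dots> = (\<Sum>b\<in>B. card {a\<in>A. P a b})"
    using assms by (simp add: sum.inter_filter[symmetric])
  finally show ?thesis .
qed

lemma set_path_sub: "p \<noteq> [] \<Longrightarrow> set p \<subseteq> {hd p, last p} \<union> internal_vertices p"
proof -
  assume "p \<noteq> []"
  then obtain a r where p: "p = a # r" by (cases p) auto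
  show ?thesis
  proof (cases "r = []")
    case True then show ?thesis using p by auto
  next
    case False
    then have "r = butlast r @ [last r]" by simp
    then have "set r = set (butlast r) \<union> {last r}" by (metis Un_insert_right empty_set list.simps(15) set_append sup_bot.right_neutral)
    then show ?thesis using p False by (auto simp: internal_vertices_def)
  qed
qed

lemma lower_bound:
  assumes sg: "simple_graph V E" and ck: "card (col ` V) = k" and k2: "k \<ge> 2"
    and conn: "int_vca_connected V E col"
  shows "real (card E) \<ge> (2 * real k - 1) / (2 * real k - 2) * real (card V) - real k / (real k - 1)"
proof -
  define C where "C = col ` V"
  define n where "n = card V"
  have fV: "finite V" using sg by (simp add: simple_graph_def)
  have EV: "\<forall>e\<in>E. e \<subseteq> V \<and> card e = 2" using sg by (simp add: simple_graph_def)
  have fE: "finite E" using EV fV by (meson Pow_iff finite_Pow_iff rev_finite_subset subsetI)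
  have fC: "finite C" using fV C_def by simp
  have cC: "card C = k" using ck C_def by simp
  define W where "W c = {v\<in>V. col v \<noteq> c}" for c
  define F where "F c = {e\<in>E. \<forall>x\<in>e. col x \<noteq> c}" for c
  have path_in: "(w, r) \<in> (wrel E (W c))\<^sup>*" if "w \<in> W c" "r \<in> W c" for w r c
  proof -
    have "w \<in> V" "r \<in> V" using that W_def by auto
    then obtain p where p: "is_path V E p w r" "\<forall>x\<in>internal_vertices p. col x \<noteq> c"
      using conn unfolding int_vca_connected_def int_c_avoiding_connected_def W_def by blast
    have pne: "p \<noteq> []" "hd p = w" "last p = r" "set p \<subseteq> V" using p(1) by (auto simp: is_path_def)
    have "set p \<subseteq> W c" using set_path_sub[OF pne(1)] pne p(2) that unfolding W_def by auto
    moreover have "wk E p" using p(1) wk_iff unfolding is_path_def by blast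
    ultimately show ?thesis using wk_rtrancl[of E p "W c"] pne by simp
  qed
  have tb: "card (W c) \<le> card (F c) + 1" if "c \<in> C" for c
  proof -
    have "card (C - {c}) > 0" using cC k2 fC that by simp
    then obtain c' where "c' \<in> C - {c}" by (metis card_gt_0_iff ex_in_conv)
    then have "c' \<in> C" "c' \<noteq> c" by auto
    then obtain r where r: "r \<in> W c" unfolding C_def W_def by auto
    show ?thesis
    proof (rule tree_bound[of "W c" r "F c" "wrel E (W c)"])
      show "finite (W c)" using fV by (simp add: W_def)
      show "r \<in> W c" by fact
      show "finite (F c)" using fE by (simp add: F_def)
      show "\<forall>w\<in>W c. (w, r) \<in> (wrel E (W c))\<^sup>*" using path_in r by blast
      show "{a, b} \<in> F c" if "(a, b) \<in> wrel E (W c)" for a b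
        using that unfolding wrel_def F_def W_def by auto
    qed
  qed
  have s1: "(\<Sum>c\<in>C. card (W c)) = n * (k - 1)"
  proof -
    have "(\<Sum>c\<in>C. card (W c)) = (\<Sum>v\<in>V. card {c\<in>C. col v \<noteq> c})"
      unfolding W_def using card_swap[OF fC fV, of "\<lambda>c v. col v \<noteq> c"] by simp
    also have "\<dots> = (\<Sum>v\<in>V. k - 1)"
    proof (rule sum.cong)
      fix v assume "v \<in> V"
      then have "{c\<in>C. col v \<noteq> c} = C - {col v}" "col v \<in> C" unfolding C_def by auto
      then show "card {c\<in>C. col v \<noteq> c} = k - 1" using cC fC by simp
    qed simp
    finally show ?thesis by (simp add: n_def)
  qed
  define cc where "cc e = card (col ` e)" for e
  define X where "X = {e\<in>E. cc e = 2}"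
  have s2: "(\<Sum>c\<in>C. card (F c)) = (\<Sum>e\<in>E. k - cc e)"
  proof -
    have "(\<Sum>c\<in>C. card (F c)) = (\<Sum>e\<in>E. card {c\<in>C. \<forall>x\<in>e. col x \<noteq> c})"
      unfolding F_def using card_swap[OF fC fE, of "\<lambda>c e. \<forall>x\<in>e. col x \<noteq> c"] by simp
    also have "\<dots> = (\<Sum>e\<in>E. k - cc e)"
    proof (rule sum.cong)
      fix e assume e: "e \<in> E"
      have eV: "e \<subseteq> V" using EV e by blast
      have sub: "col ` e \<subseteq> C" using eV unfolding C_def by blast
      have eq: "{c\<in>C. \<forall>x\<in>e. col x \<noteq> c} = C - col ` e" by blast
      have fe: "finite (col ` e)" using finite_subset[OF sub fC] .
      have "card (C - col ` e) = card C - card (col ` e)" by (rule card_Diff_subset[OF fe sub])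
      then show "card {c\<in>C. \<forall>x\<in>e. col x \<noteq> c} = k - cc e" using eq cC unfolding cc_def by simp
    qed simp
    finally show ?thesis .
  qed
  have ccle: "cc e \<le> k" if "e \<in> E" for e
  proof -
    have "col ` e \<subseteq> C" using that EV unfolding C_def by auto
    then show ?thesis using card_mono[OF fC] cC unfolding cc_def by simp
  qed
  have cc12: "cc e = (if e \<in> X then 2 else 1)" if "e \<in> E" for e
  proof -
    have ce: "card e = 2" using that EV by blast
    have fe: "finite e" using ce by (metis card.infinite zero_neq_numeral)
    have fe2: "e \<noteq> {}" using ce by (metis card.empty zero_neq_numeral)
    have "cc e \<le> 2" using ce card_image_le[OF fe(1), of col] unfolding cc_def by simp
    moreover have "cc e \<noteq> 0" using fe fe2 unfolding cc_def by simp
    ultimately show ?thesis using that unfolding X_def by auto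
  qed
  have s3: "real (\<Sum>e\<in>E. k - cc e) = real k * card E - card E - card X"
  proof -
    have "real (\<Sum>e\<in>E. k - cc e) = (\<Sum>e\<in>E. real k - real (cc e))"
      using ccle by (simp add: of_nat_diff)
    also have "\<dots> = (\<Sum>e\<in>E. (real k - 1) - (if e \<in> X then 1 else 0))"
      by (rule sum.cong) (auto simp: cc12)
    also have "\<dots> = real (card E) * (real k - 1) - card X"
      using fE by (simp add: sum_subtractf sum.If_cases X_def Int_def)
    finally show ?thesis by (simp add: algebra_simps)
  qed
  have s4: "n \<le> 2 * card X"
  proof -
    have "V \<subseteq> \<Union>X"
    proof
      fix v assume v: "v \<in> V"
      have "col v \<in> C" using v C_def by simp
      then have "card (C - {col v}) > 0" using cC k2 fC by (simp add: card_Diff_singleton)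
      then obtain c' where "c' \<in> C - {col v}" by (metis card_gt_0_iff ex_in_conv)
      then have "c' \<in> C" "c' \<noteq> col v" by auto
      then obtain w where w: "w \<in> V" "col w \<noteq> col v" unfolding C_def by auto
      obtain p where p: "is_path V E p v w" "\<forall>x\<in>internal_vertices p. col x \<noteq> col v"
        using conn v w unfolding int_vca_connected_def int_c_avoiding_connected_def by blast
      have "p \<noteq> []" "hd p = v" "last p = w" using p(1) by (auto simp: is_path_def)
      then obtain r where pr: "p = v # r" by (cases p) auto
      with w \<open>last p = w\<close> have rne: "r \<noteq> []" by auto
      then obtain y r' where r: "r = y # r'" by (cases r) auto
      have e: "{v, y} \<in> E" using p(1) pr r unfolding is_path_def by force
      have "col y \<noteq> col v"
      proof (cases "r' = []")
        case True then show ?thesis using \<open>last p = w\<close> pr r w by simp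
      next
        case False
        then have "y \<in> internal_vertices p" using pr r by (simp add: internal_vertices_def)
        then show ?thesis using p(2) by auto
      qed
      then have "cc {v,y} = 2" unfolding cc_def by simp
      then show "v \<in> \<Union>X" using e unfolding X_def by blast
    qed
    moreover have "\<Union>X \<subseteq> V" using EV X_def by auto
    ultimately have "n \<le> card (\<Union>X)" unfolding n_def using card_mono rev_finite_subset[OF fV] by metis
    also have "\<dots> \<le> sum card X" by (rule card_Union_le_sum_card)
    also have "\<dots> = sum (\<lambda>_. 2) X" using EV X_def by (intro sum.cong) auto
    finally show ?thesis by simp
  qed
  have "(\<Sum>c\<in>C. card (W c)) \<le> (\<Sum>c\<in>C. card (F c) + 1)" by (rule sum_mono) (rule tb)
  also have "\<dots> = (\<Sum>c\<in>C. card (F c)) + card C" by (simp only: sum.distrib card_eq_sum)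
  finally have "n * (k - 1) \<le> (\<Sum>e\<in>E. k - cc e) + k" using s1 s2 cC by simp
  then have "real (n * (k - 1)) \<le> real ((\<Sum>e\<in>E. k - cc e) + k)" by (simp only: of_nat_le_iff)
  then have "real n * (real k - 1) \<le> real (\<Sum>e\<in>E. k - cc e) + k" using k2
    by (simp add: of_nat_diff)
  then have A: "real n * (real k - 1) \<le> real k * card E - card E - card X + k" using s3 by simp
  have B: "real n \<le> 2 * card X" using s4 by simp
  have kp: "real k - 1 > 0" using k2 by simp
  have "(2 * real k - 1) / (2 * real k - 2) * real n - real k / (real k - 1)
      = ((2 * real k - 1) * real n - 2 * real k) / (2 * (real k - 1))"
  proof -
    have e1: "2 * real k - 2 = 2 * (real k - 1)" by simp
    have "(2 * real k - 1) / (2 * real k - 2) * real n = (2 * real k - 1) * real n / (2 * (real k - 1))"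
      unfolding e1 by simp
    moreover have "real k / (real k - 1) = 2 * real k / (2 * (real k - 1))"
      by (metis mult_divide_mult_cancel_left_if zero_neq_numeral)
    ultimately show ?thesis by (simp add: diff_divide_distrib)
  qed
  also have "\<dots> \<le> real (card E)" using kp A B by (simp add: field_simps)
  finally show ?thesis by (simp add: n_def)
qed



definition ps :: "nat \<Rightarrow> nat \<Rightarrow> nat" where "ps L v = (v - 2) mod L"
definition lst :: "nat \<Rightarrow> nat \<Rightarrow> nat \<Rightarrow> bool" where "lst L n v \<longleftrightarrow> ps L v = L - 1 \<or> v = n - 1"
definition cl :: "nat \<Rightarrow> nat \<Rightarrow> nat \<Rightarrow> nat" where
  "cl L n v = (if v = 0 then 0 else if v = 1 then 1 else if lst L n v then 1
     else if ps L v = 0 then 0 else 2 + (ps L v - 1) div 2)"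
definition nx :: "nat \<Rightarrow> nat \<Rightarrow> nat \<Rightarrow> nat" where "nx L n v = (if lst L n v then 1 else Suc v)"
definition EE :: "nat \<Rightarrow> nat \<Rightarrow> nat set set" where
  "EE L n = insert {0,1} ((\<lambda>v. {v, nx L n v}) ` {2..<n} \<union> (\<lambda>v. {0,v}) ` {v\<in>{2..<n}. ps L v = 0})"

lemma ps_lt: "L > 0 \<Longrightarrow> ps L v < L" by (simp add: ps_def)

lemma nx_props: "2 \<le> v \<Longrightarrow> v < n \<Longrightarrow> (lst L n v \<and> nx L n v = 1) \<or> (\<not> lst L n v \<and> nx L n v = Suc v \<and> Suc v < n)"
  by (auto simp: nx_def lst_def)

lemma ps_Suc: assumes "L > 0" "\<not> lst L n v" "2 \<le> v" shows "ps L (Suc v) = Suc (ps L v)"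
proof -
  have "Suc v - 2 = Suc (v - 2)" using assms(3) by simp
  moreover have "Suc (ps L v) \<noteq> L" using assms(2) by (auto simp: lst_def)
  ultimately show ?thesis unfolding ps_def by (simp add: mod_Suc)
qed

lemma E_fwd: "2 \<le> v \<Longrightarrow> v < n \<Longrightarrow> {v, nx L n v} \<in> EE L n"
  by (auto simp: EE_def)
lemma E_first: "2 \<le> v \<Longrightarrow> v < n \<Longrightarrow> ps L v = 0 \<Longrightarrow> {0, v} \<in> EE L n"
  by (auto simp: EE_def)
lemma E_01: "{0,1} \<in> EE L n" by (simp add: EE_def)

lemma wrel_sym: "(a,b) \<in> wrel E T \<Longrightarrow> (b,a) \<in> wrel E T"
  by (auto simp: wrel_def insert_commute)

lemma wrel_rtrancl_sym: "(a,b) \<in> (wrel E T)\<^sup>* \<Longrightarrow> (b,a) \<in> (wrel E T)\<^sup>*"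
proof (induction rule: rtrancl_induct)
  case base then show ?case by simp
next
  case (step y z)
  then show ?case using wrel_sym converse_rtrancl_into_rtrancl by metis
qed

lemma fwd:
  assumes "L > 0" "\<forall>i<d. \<not> lst L n (x+i)" "lst L n (x+d)" "2 \<le> x" "x + d < n" "x \<in> T" "1 \<in> T"
    "\<forall>i. 1 \<le> i \<and> i \<le> d \<longrightarrow> x+i \<in> T"
  shows "(x,1) \<in> (wrel (EE L n) T)\<^sup>*"
  using assms
proof (induction d arbitrary: x)
  case 0
  then have "nx L n x = 1" by (simp add: nx_def)
  then have "{x,1} \<in> EE L n" using E_fwd[of x n L] 0 by simp
  then show ?case using 0 by (auto simp: wrel_def)
next
  case (Suc d)
  have nl: "\<not> lst L n x" using Suc.prems(2)[rule_format, of 0] by simp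
  then have "nx L n x = Suc x" by (simp add: nx_def)
  then have e: "{x, Suc x} \<in> EE L n" using E_fwd[of x n L] Suc.prems by simp
  have sT: "Suc x \<in> T" using Suc.prems(8)[rule_format, of 1] by simp
  have "(Suc x, 1) \<in> (wrel (EE L n) T)\<^sup>*"
  proof (rule Suc.IH)
    show "\<forall>i<d. \<not> lst L n (Suc x + i)" using Suc.prems(2) by auto
    show "lst L n (Suc x + d)" using Suc.prems(3) by simp
    show "\<forall>i. 1 \<le> i \<and> i \<le> d \<longrightarrow> Suc x + i \<in> T" using Suc.prems(8) by auto
  qed (use Suc.prems sT in auto)
  moreover have "(x, Suc x) \<in> wrel (EE L n) T" using e sT Suc.prems(6) by (simp add: wrel_def)
  ultimately show ?case by (simp add: converse_rtrancl_into_rtrancl)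
qed

lemma ps_pred: assumes "L > 0" "ps L x = Suc p" "2 \<le> x" shows "ps L (x - 1) = p" "3 \<le> x"
proof -
  have "x - 2 \<noteq> 0" using assms(2) by (auto simp: ps_def)
  then show x3: "3 \<le> x" using assms(3) by simp
  have "x - 2 = Suc (x - 1 - 2)" using x3 by simp
  then have "ps L x = (if Suc (ps L (x-1)) = L then 0 else Suc (ps L (x-1)))"
    unfolding ps_def using mod_Suc[of "x - 1 - 2" L] by simp
  then show "ps L (x - 1) = p" using assms(2) by (auto split: if_splits)
qed

lemma bwd:
  assumes "L > 0" "ps L x = p" "2 \<le> x" "x < n" "x \<in> T" "0 \<in> T" "\<forall>i. 1 \<le> i \<and> i \<le> p \<longrightarrow> x - i \<in> T"
  shows "(x,0) \<in> (wrel (EE L n) T)\<^sup>*"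
  using assms
proof (induction p arbitrary: x)
  case 0
  then have "{0,x} \<in> EE L n" using E_first[of x n L] by simp
  then show ?case using 0 by (auto simp: wrel_def insert_commute)
next
  case (Suc p)
  have y: "ps L (x - 1) = p" "3 \<le> x" using ps_pred[OF Suc.prems(1,2,3)] by auto
  have pl: "Suc p < L" using ps_lt[OF Suc.prems(1), of x] Suc.prems(2) by simp
  have nl: "\<not> lst L n (x - 1)" using y pl Suc.prems(4) by (auto simp: lst_def)
  then have "nx L n (x - 1) = x" using y by (simp add: nx_def)
  then have e: "{x - 1, x} \<in> EE L n" using E_fwd[of "x - 1" n L] y Suc.prems(4) by simp
  have yT: "x - 1 \<in> T" using Suc.prems(7) by auto
  have "(x - 1, 0) \<in> (wrel (EE L n) T)\<^sup>*"
  proof (rule Suc.IH)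
    show "\<forall>i. 1 \<le> i \<and> i \<le> p \<longrightarrow> x - 1 - i \<in> T"
    proof (intro allI impI)
      fix i assume "1 \<le> i \<and> i \<le> p"
      then have "x - 1 - i = x - Suc i" "1 \<le> Suc i \<and> Suc i \<le> Suc p" by auto
      then show "x - 1 - i \<in> T" using Suc.prems(7) by presburger
    qed
  qed (use Suc.prems y yT in auto)
  moreover have "(x, x - 1) \<in> wrel (EE L n) T" using e yT Suc.prems(5) by (auto simp: wrel_def insert_commute)
  ultimately show ?case by (simp add: converse_rtrancl_into_rtrancl)
qed



lemma hub:
  assumes k2: "k \<ge> 2" and L: "L = 2*k - 2" and wn: "w < n"
    and TV: "{x\<in>{0..<n}. cl L n x \<noteq> c} \<subseteq> T" and wT: "w \<in> T"
  shows "\<exists>h. (h = 0 \<or> h = 1) \<and> h \<in> T \<and> (w,h) \<in> (wrel (EE L n) T)\<^sup>*"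
proof (cases "w \<le> 1")
  case True then show ?thesis using wT by (intro exI[of _ w]) auto
next
  case False
  then have w2: "2 \<le> w" by simp
  have L0: "L > 0" using L k2 by simp
  have ex: "\<exists>d. lst L n (w+d)" using wn by (intro exI[of _ "n - 1 - w"]) (simp add: lst_def)
  define d where "d = (LEAST d. lst L n (w+d))"
  have dl: "lst L n (w+d)" unfolding d_def using LeastI_ex[OF ex] .
  have dn: "\<forall>i<d. \<not> lst L n (w+i)" unfolding d_def using not_less_Least by blast
  have "d \<le> n - 1 - w" unfolding d_def using wn by (intro Least_le) (simp add: lst_def)
  then have dlt: "w + d < n" using wn by simp
  have psf: "i \<le> d \<Longrightarrow> ps L (w+i) = ps L w + i" for i
  proof (induction i)
    case (Suc i)
    then have "\<not> lst L n (w+i)" using dn by simp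
    then have "ps L (Suc (w+i)) = Suc (ps L (w+i))" using ps_Suc[OF L0 _] w2 by simp
    then show ?case using Suc by simp
  qed simp
  have clf: "cl L n (w+i) = (if lst L n (w+i) then 1 else 2 + (ps L w + i - 1) div 2)"
    if "1 \<le> i" "i \<le> d" for i
    using that w2 psf[OF that(2)] unfolding cl_def by auto
  have cl1: "cl L n 1 = 1" "cl L n 0 = 0" by (auto simp: cl_def)
  have FWD: "(w,1) \<in> (wrel (EE L n) T)\<^sup>*"
    if "c \<noteq> 1" "\<forall>i. 1 \<le> i \<and> i \<le> d \<longrightarrow> cl L n (w+i) \<noteq> c"
  proof (rule fwd[OF L0 dn dl w2 dlt wT])
    show "1 \<in> T" using TV cl1 that(1) wn w2 by auto
    show "\<forall>i. 1 \<le> i \<and> i \<le> d \<longrightarrow> w + i \<in> T"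
    proof (intro allI impI)
      fix i assume "1 \<le> i \<and> i \<le> d"
      then show "w + i \<in> T" using that(2) dlt TV by auto
    qed
  qed
  have pw: "ps L w \<le> w - 2" unfolding ps_def by simp
  have bfacts: "ps L (w-i) = ps L w - i \<and> \<not> lst L n (w - i) \<and> 2 \<le> w - i \<and> w - i < n"
    if "1 \<le> i" "i \<le> ps L w" for i
  proof -
    define a where "a = w - 2"
    have a1: "a - i = a div L * L + (a mod L - i)" using that div_mult_mod_eq[of a L]
      unfolding a_def ps_def by linarith
    have r: "a mod L - i < L" using L0 by (meson le_less_trans diff_le_self mod_less_divisor)
    have "(a - i) mod L = a mod L - i" unfolding a1 using r by simp
    moreover have "w - i - 2 = a - i" unfolding a_def by simp
    ultimately have p: "ps L (w-i) = ps L w - i" unfolding ps_def a_def by simp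
    have "ps L w < L" using ps_lt[OF L0] .
    moreover have "w - i \<noteq> n - 1" using that wn w2 by linarith
    moreover have "ps L w - i \<noteq> L - 1" using that \<open>ps L w < L\<close> by linarith
    ultimately have "\<not> lst L n (w - i)" using p unfolding lst_def by simp
    then show ?thesis using p that pw wn by auto
  qed
  have clb: "cl L n (w-i) = (if ps L w - i = 0 then 0 else 2 + (ps L w - i - 1) div 2)"
    if "1 \<le> i" "i \<le> ps L w" for i
    using bfacts[OF that] unfolding cl_def by auto
  have BWD: "(w,0) \<in> (wrel (EE L n) T)\<^sup>*"
    if "c \<noteq> 0" "\<forall>i. 1 \<le> i \<and> i \<le> ps L w \<longrightarrow> cl L n (w-i) \<noteq> c"
  proof (rule bwd[OF L0 refl w2 wn wT])
    show "0 \<in> T" using TV cl1 that(1) wn by auto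
    show "\<forall>i. 1 \<le> i \<and> i \<le> ps L w \<longrightarrow> w - i \<in> T"
    proof (intro allI impI)
      fix i assume i: "1 \<le> i \<and> i \<le> ps L w"
      then show "w - i \<in> T" using that(2) bfacts[of i] TV by auto
    qed
  qed
  have "(w,1) \<in> (wrel (EE L n) T)\<^sup>* \<and> 1 \<in> T \<or> (w,0) \<in> (wrel (EE L n) T)\<^sup>* \<and> 0 \<in> T"
  proof (cases "c = 0")
    case True
    have "(w,1) \<in> (wrel (EE L n) T)\<^sup>*"
      by (rule FWD) (use True clf in auto)
    moreover have "1 \<in> T" using TV cl1 True wn w2 by auto
    ultimately show ?thesis by blast
  next
    case c0: False
    show ?thesis
    proof (cases "c = 1")
      case True
      have "(w,0) \<in> (wrel (EE L n) T)\<^sup>*"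
        by (rule BWD) (use True clb in auto)
      moreover have "0 \<in> T" using TV cl1 True wn by auto
      ultimately show ?thesis by blast
    next
      case c1: False
      show ?thesis
      proof (cases "ps L w \<ge> 2*c - 2")
        case True
        have "(w,1) \<in> (wrel (EE L n) T)\<^sup>*"
        proof (rule FWD[OF c1], intro allI impI)
          fix i assume i: "1 \<le> i \<and> i \<le> d"
          show "cl L n (w + i) \<noteq> c" using clf[of i] i True c1 c0 by auto
        qed
        moreover have "1 \<in> T" using TV cl1 c1 wn w2 by auto
        ultimately show ?thesis by blast
      next
        case False
        have "(w,0) \<in> (wrel (EE L n) T)\<^sup>*"
        proof (rule BWD[OF c0], intro allI impI)
          fix i assume i: "1 \<le> i \<and> i \<le> ps L w"
          show "cl L n (w - i) \<noteq> c" using clb[of i] i False c1 c0 by auto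
        qed
        moreover have "0 \<in> T" using TV cl1 c0 wn by auto
        ultimately show ?thesis by blast
      qed
    qed
  qed
  then show ?thesis by blast
qed

lemma constr_conn:
  assumes k2: "k \<ge> 2" and L: "L = 2*k - 2"
  shows "int_vca_connected {0..<n} (EE L n) (cl L n)"
  unfolding int_vca_connected_def
proof (intro allI ballI)
  fix c u v assume u: "u \<in> {0..<n}" and v: "v \<in> {0..<n}"
  define T where "T = {x\<in>{0..<n}. cl L n x \<noteq> c} \<union> {u,v}"
  have TV: "{x\<in>{0..<n}. cl L n x \<noteq> c} \<subseteq> T" unfolding T_def by blast
  obtain hu where hu: "hu = 0 \<or> hu = 1" "hu \<in> T" "(u,hu) \<in> (wrel (EE L n) T)\<^sup>*"
    using hub[OF k2 L _ TV, of u] u T_def by auto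
  obtain hv where hv: "hv = 0 \<or> hv = 1" "hv \<in> T" "(v,hv) \<in> (wrel (EE L n) T)\<^sup>*"
    using hub[OF k2 L _ TV, of v] v T_def by auto
  have hvv: "(hv, v) \<in> (wrel (EE L n) T)\<^sup>*" using wrel_rtrancl_sym[OF hv(3)] .
  have "(hu, hv) \<in> (wrel (EE L n) T)\<^sup>*"
  proof (cases "hu = hv")
    case False
    then have "{hu,hv} = {0,1}" using hu(1) hv(1) by auto
    then have "(hu,hv) \<in> wrel (EE L n) T" using hu(2) hv(2) E_01 by (simp add: wrel_def)
    then show ?thesis by simp
  qed simp
  then have "(u,v) \<in> (wrel (EE L n) T)\<^sup>*" using hu(3) hvv by (meson rtrancl_trans)
  then show "int_c_avoiding_connected {0..<n} (EE L n) (cl L n) c u v"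
    using rt_icac[OF u v] unfolding T_def by simp
qed



lemma constr_simple:
  assumes "2 \<le> n"
  shows "simple_graph {0..<n} (EE L n)"
proof -
  have "e \<subseteq> {0..<n} \<and> card e = 2" if "e \<in> EE L n" for e
  proof -
  from that consider "e = {0,1}" | v where "2 \<le> v" "v < n" "e = {v, nx L n v}"
    | v where "2 \<le> v" "v < n" "e = {0, v}"
    unfolding EE_def by auto
  then show "e \<subseteq> {0..<n} \<and> card e = 2"
  proof cases
    case 1 then show ?thesis using assms by auto
  next
    case (2 v) then show ?thesis using nx_props[of v n L] by auto
  next
    case (3 v) then show ?thesis by auto
  qed
  qed
  then show ?thesis unfolding simple_graph_def by auto
qed

lemma constr_colors:
  assumes k2: "k \<ge> 2" and L: "L = 2*k - 2" and n: "n \<ge> 2 + L"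
  shows "cl L n ` {0..<n} = {0..<k}"
proof
  have L0: "L > 0" using L k2 by simp
  show "cl L n ` {0..<n} \<subseteq> {0..<k}"
  proof
    fix c assume "c \<in> cl L n ` {0..<n}"
    then obtain x where x: "x < n" "c = cl L n x" by auto
    have p: "ps L x < L" using ps_lt[OF L0] .
    show "c \<in> {0..<k}"
    proof (cases "x \<le> 1 \<or> lst L n x \<or> ps L x = 0")
      case True then show ?thesis using x k2 by (auto simp: cl_def)
    next
      case False
      then have "ps L x \<noteq> L - 1" "ps L x \<ge> 1" by (auto simp: lst_def)
      then have "2 + (ps L x - 1) div 2 < k" using p L k2 by linarith
      then show ?thesis using x False by (auto simp: cl_def)
    qed
  qed
  show "{0..<k} \<subseteq> cl L n ` {0..<n}"
  proof
    fix c assume c: "c \<in> {0..<k}"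
    show "c \<in> cl L n ` {0..<n}"
    proof (cases "c \<le> 1")
      case True
      then have "cl L n c = c" by (auto simp: cl_def)
      then show ?thesis using True n L0 by (metis atLeastLessThan_iff image_eqI le_less_trans less_le_trans not_le zero_le
             add_leD1 one_less_numeral_iff semiring_norm(76) le_add1)
    next
      case False
      define x where "x = 2*c - 1"
      have ps: "ps L x = 2*c - 3" unfolding ps_def x_def using False c L by simp
      have a1: "2*c - 3 \<noteq> L - 1" using False c L by simp
      have a2: "x \<noteq> n - 1" using False c L n x_def by simp
      have nl: "\<not> lst L n x" unfolding lst_def using ps a1 a2 by simp
      have "cl L n x = c" unfolding cl_def using nl ps False x_def by auto
      moreover have "x < n" using x_def c L n by simp
      ultimately show ?thesis by force
    qed
  qed
qed



lemma cnt_card: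
  assumes L0: "L > 0" and n2: "2 \<le> n"
  shows "card {v\<in>{2..<n}. ps L v = 0} = (n-2) div L + (if (n-2) mod L = 0 then 0 else 1)"
proof -
  define a where "a = n - 2"
  define q where "q = a div L"
  define m where "m = a mod L"
  define cnt where "cnt = q + (if m = 0 then 0 else 1)"
  have aq: "a = q * L + m" unfolding q_def m_def by simp
  have mL: "m < L" unfolding m_def using L0 by simp
  have S: "{v\<in>{2..<n}. ps L v = 0} = (\<lambda>j. 2 + j*L) ` {0..<cnt}"
  proof
    show "{v\<in>{2..<n}. ps L v = 0} \<subseteq> (\<lambda>j. 2 + j*L) ` {0..<cnt}"
    proof
      fix v assume v: "v \<in> {v\<in>{2..<n}. ps L v = 0}"
      define j where "j = (v - 2) div L"
      have vj: "v - 2 = j * L" using v div_mult_mod_eq[of "v-2" L] unfolding j_def ps_def by simp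
      have "2 \<le> v" "v < n" using v by auto
      then have "v - 2 < a" using a_def by arith
      then have lt: "j * L < q * L + m" using vj aq by linarith
      have "j < cnt"
      proof (cases "m = 0")
        case True then show ?thesis using lt cnt_def by (simp add: mult_less_cancel2)
      next
        case False
        then have "j * L < (q + 1) * L" using lt mL by simp
        then have "0 < L \<and> j < q + 1" using mult_less_cancel2[of j L "q+1"] by blast
        then have "j < q + 1" by blast
        then show ?thesis using False cnt_def by simp
      qed
      moreover have "v = 2 + j * L" using vj v by auto
      ultimately show "v \<in> (\<lambda>j. 2 + j*L) ` {0..<cnt}" by auto
    qed
    show "(\<lambda>j. 2 + j*L) ` {0..<cnt} \<subseteq> {v\<in>{2..<n}. ps L v = 0}"
    proof
      fix v assume "v \<in> (\<lambda>j. 2 + j*L) ` {0..<cnt}"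
      then obtain j where j: "j < cnt" "v = 2 + j * L" by auto
      have "j * L < a"
      proof (cases "m = 0")
        case True
        then have "j < q" using j cnt_def by simp
        then have "j * L < q * L" using L0 by simp
        then show ?thesis using aq True by simp
      next
        case False
        then have "j \<le> q" using j cnt_def by simp
        then have "j * L \<le> q * L" by (rule mult_le_mono1)
        then show ?thesis using aq False by linarith
      qed
      then have "v < n" using j a_def n2 by simp
      moreover have "ps L v = 0" using j unfolding ps_def by simp
      ultimately show "v \<in> {v\<in>{2..<n}. ps L v = 0}" using j by simp
    qed
  qed
  have inj: "inj_on (\<lambda>j. 2 + j*L) {0..<cnt}" using L0 by (auto simp: inj_on_def)
  have "card {v\<in>{2..<n}. ps L v = 0} = cnt" using card_image[OF inj] S by simp
  then show ?thesis unfolding cnt_def q_def m_def a_def .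
qed

lemma EE_card:
  assumes L0: "L > 0" and n2: "2 \<le> n"
  shows "card (EE L n) = Suc ((n - 2) + card {v\<in>{2..<n}. ps L v = 0})"
proof -
  define S where "S = {v\<in>{2..<n}. ps L v = 0}"
  define A where "A = (\<lambda>v. {v, nx L n v}) ` {2..<n}"
  define B where "B = (\<lambda>v. {0::nat,v}) ` S"
  have injA: "inj_on (\<lambda>v. {v, nx L n v}) {2..<n}"
  proof (rule inj_onI)
    fix v w assume v: "v \<in> {2..<n}" and w: "w \<in> {2..<n}" and e: "{v, nx L n v} = {w, nx L n w}"
    show "v = w"
    proof (rule ccontr)
      assume "v \<noteq> w"
      then have "v = nx L n w" "w = nx L n v" using e by (auto simp: doubleton_eq_iff)
      moreover have "nx L n v = 1 \<or> nx L n v = Suc v" "nx L n w = 1 \<or> nx L n w = Suc w" by (simp_all add: nx_def)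
      ultimately show False using v w by auto
    qed
  qed
  have injB: "inj_on (\<lambda>v. {0::nat,v}) S" unfolding S_def by (auto simp: inj_on_def doubleton_eq_iff)
  have fA: "finite A" "finite B" unfolding A_def B_def S_def by simp_all
  have disj: "A \<inter> B = {}"
  proof -
    have "{v, nx L n v} \<noteq> {0, w}" if "v \<in> {2..<n}" for v w
    proof -
      have "0 \<notin> {v, nx L n v}" using that by (auto simp: nx_def)
      then show ?thesis by blast
    qed
    then show ?thesis unfolding A_def B_def by blast
  qed
  have n01: "{0,1} \<notin> A \<union> B"
  proof -
    have a: "{0::nat, 1} \<noteq> {v, nx L n v}" if "v \<in> {2..<n}" for v
    proof -
      have "0 \<notin> {v, nx L n v}" using that by (auto simp: nx_def)
      then show ?thesis by blast
    qed
    have b: "{0::nat, 1} \<noteq> {0::nat, w}" if "w \<in> S" for w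
    proof -
      have "1 \<notin> {0::nat, w}" using that unfolding S_def by auto
      then show ?thesis by blast
    qed
    have "{0,1} \<notin> A" unfolding A_def using a by (simp add: image_iff)
    moreover have "{0,1} \<notin> B" unfolding B_def using b by (simp add: image_iff)
    ultimately show ?thesis by simp
  qed
  have "EE L n = insert {0,1} (A \<union> B)" unfolding EE_def A_def B_def S_def by simp
  then have "card (EE L n) = Suc (card A + card B)"
    using n01 fA disj by (simp add: card_Un_disjoint)
  moreover have "card A = n - 2" unfolding A_def using card_image[OF injA] by simp
  moreover have "card B = card S" unfolding B_def using card_image[OF injB] .
  ultimately show ?thesis unfolding S_def by simp
qed

lemma bound_eq:
  assumes k2: "k \<ge> 2" and L: "L = 2*k - 2" and n2: "2 \<le> n"
  shows "icva_bound n k = int (Suc ((n - 2) + ((n-2) div L + (if (n-2) mod L = 0 then 0 else 1))))"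
proof -
  define q where "q = (n-2) div L"
  define m where "m = (n-2) mod L"
  define K where "K = k - 1"
  have K1: "K \<ge> 1" using k2 K_def by simp
  have LK: "L = 2 * K" using L K_def by simp
  have nq: "n = 2 + q * L + m" unfolding q_def m_def using n2 by simp
  have mL: "m < 2 * K" unfolding m_def LK using K1 by simp
  have rk: "real k = real K + 1" using K_def k2 by simp
  have Kp: "real K > 0" using K1 by simp
  have ex: "(2 * real k - 1) / (2 * real k - 2) * real n - real k / (real k - 1)
      = 1 + real q * (2 * real K + 1) + real m + real m / (2 * real K)"
  proof -
    have e1: "2 * real k - 2 = 2 * real K" "2 * real k - 1 = 2 * real K + 1" "real k - 1 = real K" using rk by simp_all
    have rn: "real n = 2 + real q * (2 * real K) + real m" using nq LK by simp
    show ?thesis unfolding e1 rn rk using Kp by (simp add: field_simps)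
  qed
  define z where "z = int (Suc ((n - 2) + (q + (if m = 0 then 0 else 1))))"
  have zv: "real_of_int z = 1 + real q * (2 * real K + 1) + real m + (if m = 0 then 0 else 1)"
  proof -
    have "n - 2 = q * (2*K) + m" using nq LK by simp
    then show ?thesis unfolding z_def by (simp add: algebra_simps)
  qed
  have "ceiling ((2 * real k - 1) / (2 * real k - 2) * real n - real k / (real k - 1)) = z"
  proof (rule ceiling_unique)
    have fr: "real m / (2 * real K) < 1" using mL Kp by (simp add: divide_less_eq)
    have fr0: "real m / (2 * real K) \<ge> 0" using Kp by simp
    have fr1: "m \<noteq> 0 \<Longrightarrow> real m / (2 * real K) > 0" using Kp by simp
    show "real_of_int z - 1 < (2 * real k - 1) / (2 * real k - 2) * real n - real k / (real k - 1)"
      unfolding ex zv using fr fr0 fr1 by (cases "m = 0") auto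
    show "(2 * real k - 1) / (2 * real k - 2) * real n - real k / (real k - 1) \<le> real_of_int z"
      unfolding ex zv using fr fr0 by (cases "m = 0") auto
  qed
  moreover have "k \<noteq> 1" using k2 by simp
  ultimately show ?thesis unfolding icva_bound_def z_def q_def m_def by simp
qed



lemma lb1:
  assumes sg: "simple_graph V E" and c1: "card (col ` V) = 1" and conn: "int_vca_connected V E col"
  shows "card V choose 2 \<le> card E"
proof -
  have fV: "finite V" using sg by (simp add: simple_graph_def)
  have EV: "\<forall>e\<in>E. e \<subseteq> V \<and> card e = 2" using sg by (simp add: simple_graph_def)
  have fE: "finite E" using EV fV by (meson Pow_iff finite_Pow_iff rev_finite_subset subsetI)
  obtain c0 where c0: "col ` V = {c0}" using c1 card_1_singletonE by blast
  have colv: "col v = c0" if "v \<in> V" for v using c0 that by blast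
  have sub: "{e. e \<subseteq> V \<and> card e = 2} \<subseteq> E"
  proof
    fix e assume "e \<in> {e. e \<subseteq> V \<and> card e = 2}"
    then obtain a b where e: "e = {a,b}" "a \<noteq> b" "a \<in> V" "b \<in> V" by (auto simp: card_2_iff)
    obtain p where p: "is_path V E p a b" "\<forall>w\<in>internal_vertices p. col w \<noteq> c0"
      using conn e unfolding int_vca_connected_def int_c_avoiding_connected_def by blast
    have pp: "p \<noteq> []" "hd p = a" "last p = b" "set p \<subseteq> V"
      "\<forall>i. Suc i < length p \<longrightarrow> {p ! i, p ! Suc i} \<in> E" using p(1) by (auto simp: is_path_def)
    have "set (butlast (tl p)) \<subseteq> set (tl p)" by (meson in_set_butlastD subsetI)
    moreover have "set (tl p) \<subseteq> set p" by (cases p) auto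
    ultimately have "internal_vertices p \<subseteq> set p" unfolding internal_vertices_def by blast
    then have ie: "internal_vertices p = {}" using p(2) pp(4) colv by blast
    obtain r where pr: "p = a # r" using pp by (cases p) auto
    have rne: "r \<noteq> []" using pr pp e by auto
    have "butlast r = []" using ie pr by (simp add: internal_vertices_def)
    then have "r = [b]" using rne pp pr by (metis append_butlast_last_id append_Nil last.simps)
    then have "p = [a,b]" using pr by simp
    then show "e \<in> E" using pp(5)[rule_format, of 0] e by simp
  qed
  have "card {e. e \<subseteq> V \<and> card e = 2} = card V choose 2" using n_subsets[OF fV] .
  then show ?thesis using card_mono[OF fE sub] by simp
qed

lemma complete_constr:
  assumes "n \<ge> 1"
  shows "simple_graph {0..<n} {e. e \<subseteq> {0..<n} \<and> card e = 2}
     \<and> card {0..<n} = n \<and> card ((\<lambda>_. 0::nat) ` {0..<n}) = 1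
     \<and> int_vca_connected {0..<n} {e. e \<subseteq> {0..<n} \<and> card e = 2} (\<lambda>_. 0::nat)
     \<and> int (card {e. e \<subseteq> {0..<n::nat} \<and> card e = 2}) = icva_bound n 1"
proof (intro conjI)
  show "simple_graph {0..<n} {e. e \<subseteq> {0..<n} \<and> card e = 2}" by (simp add: simple_graph_def)
  show "card {0..<n} = n" by simp
  have "(\<lambda>_. 0::nat) ` {0..<n} = {0}" using assms by (simp add: image_constant_conv)
  then show "card ((\<lambda>_. 0::nat) ` {0..<n}) = 1" by simp
  show "int (card {e. e \<subseteq> {0..<n::nat} \<and> card e = 2}) = icva_bound n 1"
    unfolding icva_bound_def using n_subsets[of "{0..<n::nat}" 2] by simp
  show "int_vca_connected {0..<n} {e. e \<subseteq> {0..<n} \<and> card e = 2} (\<lambda>_. 0::nat)"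
    unfolding int_vca_connected_def
  proof (intro allI ballI)
    fix c u v assume u: "u \<in> {0..<n}" and v: "v \<in> {0..<n::nat}"
    let ?T = "{w \<in> {0..<n}. (0::nat) \<noteq> c} \<union> {u, v}"
    have "(u,v) \<in> (wrel {e. e \<subseteq> {0..<n} \<and> card e = 2} ?T)\<^sup>*"
    proof (cases "u = v")
      case False
      then have "(u,v) \<in> wrel {e. e \<subseteq> {0..<n} \<and> card e = 2} ?T" using u v by (simp add: wrel_def)
      then show ?thesis by simp
    qed simp
    then show "int_c_avoiding_connected {0..<n} {e. e \<subseteq> {0..<n} \<and> card e = 2} (\<lambda>_. 0) c u v"
      using rt_icac[OF u v, of _ "\<lambda>_. 0::nat" c] by simp
  qed
qed

theorem theorem3p16:
  fixes V :: "'a set" and E :: "'a set set" and col :: "'a \<Rightarrow> 'c" and n k :: nat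
  assumes "simple_graph V E" and "card V = n" and "card (col ` V) = k" and "k \<ge> 1"
    and "int_vca_connected V E col"
  shows "int (card E) \<ge> icva_bound n k
    \<and> (\<forall>k'::nat. k' \<ge> 1 \<longrightarrow> (\<exists>N. \<forall>n'\<ge>N. \<exists>(V'::nat set) (E'::nat set set) (col'::nat \<Rightarrow> nat).
          simple_graph V' E' \<and> card V' = n' \<and> card (col' ` V') = k'
          \<and> int_vca_connected V' E' col' \<and> int (card E') = icva_bound n' k'))"
proof
  show "int (card E) \<ge> icva_bound n k"
  proof (cases "k = 1")
    case True
    then show ?thesis using lb1[OF assms(1) _ assms(5)] assms(2,3) unfolding icva_bound_def by simp
  next
    case False
    then have k2: "k \<ge> 2" using assms(4) by simp
    have "real (card E) \<ge> (2 * real k - 1) / (2 * real k - 2) * real n - real k / (real k - 1)"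
      using lower_bound[OF assms(1) assms(3) k2 assms(5)] assms(2) by simp
    then show ?thesis using False unfolding icva_bound_def by (simp add: ceiling_le_iff)
  qed
next
  show "\<forall>k'::nat. k' \<ge> 1 \<longrightarrow> (\<exists>N. \<forall>n'\<ge>N. \<exists>(V'::nat set) (E'::nat set set) (col'::nat \<Rightarrow> nat).
          simple_graph V' E' \<and> card V' = n' \<and> card (col' ` V') = k'
          \<and> int_vca_connected V' E' col' \<and> int (card E') = icva_bound n' k')"
  proof (intro allI impI)
    fix k' :: nat assume k1: "k' \<ge> 1"
    show "\<exists>N. \<forall>n'\<ge>N. \<exists>(V'::nat set) (E'::nat set set) (col'::nat \<Rightarrow> nat).
          simple_graph V' E' \<and> card V' = n' \<and> card (col' ` V') = k'
          \<and> int_vca_connected V' E' col' \<and> int (card E') = icva_bound n' k'"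
    proof (cases "k' = 1")
      case True
      show ?thesis
      proof (intro exI[of _ 1] allI impI)
        fix n' :: nat assume "n' \<ge> 1"
        then show "\<exists>(V'::nat set) (E'::nat set set) (col'::nat \<Rightarrow> nat).
          simple_graph V' E' \<and> card V' = n' \<and> card (col' ` V') = k'
          \<and> int_vca_connected V' E' col' \<and> int (card E') = icva_bound n' k'"
          using complete_constr[of n'] True by blast
      qed
    next
      case False
      then have k2: "k' \<ge> 2" using k1 by simp
      define L where "L = 2 * k' - 2"
      have L0: "L > 0" using k2 L_def by simp
      show ?thesis
      proof (intro exI[of _ "2 + L"] allI impI)
        fix n' :: nat assume n': "n' \<ge> 2 + L"
        have n2: "2 \<le> n'" using n' by simp
        have "simple_graph {0..<n'} (EE L n')" using constr_simple[OF n2] .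
        moreover have "card {0..<n'} = n'" by simp
        moreover have "card (cl L n' ` {0..<n'}) = k'" using constr_colors[OF k2 L_def n'] by simp
        moreover have "int_vca_connected {0..<n'} (EE L n') (cl L n')" using constr_conn[OF k2 L_def] .
        moreover have "int (card (EE L n')) = icva_bound n' k'"
          using EE_card[OF L0 n2] cnt_card[OF L0 n2] bound_eq[OF k2 L_def n2] by simp
        ultimately show "\<exists>(V'::nat set) (E'::nat set set) (col'::nat \<Rightarrow> nat).
          simple_graph V' E' \<and> card V' = n' \<and> card (col' ` V') = k'
          \<and> int_vca_connected V' E' col' \<and> int (card E') = icva_bound n' k'" by blast
      qed
    qed
  qed
qed

end
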